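(* Let $n$ be a positive integer and let $\alpha,\beta,\gamma,\delta: \mathcal{P}(n) \to [0,\infty)$ satisfy \[ \alpha(A)\beta(B) \leq \gamma(A \cup B)\,\delta(A \cap B) \quad \text{for all } A,B \in \mathcal{P}(n). \] Then \[ \Big(\sum_{A \in \mathcal{P}(n)} \alpha(A)q^{|A|}\Big)\Big( \sum_{B \in \mathcal{P}(n)} \beta(B)q^{|B|}\Big) \ll \Big(\sum_{C \in \mathcal{P}(n)} \gamma(C)q^{|C|}\Big)\Big( \sum_{D \in \mathcal{P}(n)} \delta(D)q^{|D|}\Big). \] Equivalently, for every integer $k \ge 0$, \[ \sum_{|A|+|B|=k}\alpha(A)\beta(B) \le \sum_{|C|+|D|=k}\gamma(C)\delta(D), \] where the sums range over pairs of subsets of $[n]$.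
   Context: $[n]=\{1,\dots,n\}$ and $\mathcal{P}(n)$ denotes the power set of $[n]$. For real polynomials $P(q),R(q)$, $P(q) \ll R(q)$ means that every coefficient of $R(q)-P(q)$ is a non-negative real number. *)

theory Defs
  imports Complex_Main "HOL-Computational_Algebra.Polynomial"
begin

definition set_gen_poly :: "nat \<Rightarrow> (nat set \<Rightarrow> real) \<Rightarrow> real poly" where
  "set_gen_poly n f = (\<Sum>A\<in>Pow {1..n}. monom (f A) (card A))"

definition coeff_le :: "real poly \<Rightarrow> real poly \<Rightarrow> bool" (infix "\<lless>" 50) where
  "P \<lless> R \<longleftrightarrow> (\<forall>i. coeff (R - P) i \<ge> 0)"

end

theory Submission
  imports Defs
begin

lemma one_dim:
  fixes a0 a1 b0 b1 c0 c1 d0 d1 :: real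
  assumes nn: "a0 \<ge> 0" "a1 \<ge> 0" "b0 \<ge> 0" "b1 \<ge> 0" "c0 \<ge> 0" "c1 \<ge> 0" "d0 \<ge> 0" "d1 \<ge> 0"
    and h00: "a0*b0 \<le> c0*d0" and h01: "a0*b1 \<le> c1*d0" and h10: "a1*b0 \<le> c1*d0"
    and h11: "a1*b1 \<le> c1*d1"
  shows "(a0+a1)*(b0+b1) \<le> (c0+c1)*(d0+d1)"
proof -
  define X where "X = c1*d0"
  define p where "p = a0*b1"
  define r where "r = a1*b0"
  have p0: "p \<ge> 0" and r0: "r \<ge> 0" using nn by (simp_all add: p_def r_def)
  have cd: "c0*d1 \<ge> 0" using nn by simp
  have cross: "p + r \<le> c0*d1 + X"
  proof (cases "X = 0")
    case True
    then have "p = 0" "r = 0" using h01 h10 p0 r0 by (auto simp: p_def r_def X_def)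
    then show ?thesis using cd True by simp
  next
    case False
    then have Xp: "X > 0" using nn by (simp add: X_def)
    have "p * r = (a0*b0)*(a1*b1)" by (simp add: p_def r_def algebra_simps)
    also have "\<dots> \<le> (c0*d0)*(c1*d1)"
      by (rule mult_mono[OF h00 h11]) (use nn in auto)
    also have "\<dots> = (c0*d1)*X" by (simp add: X_def algebra_simps)
    finally have pr: "p*r \<le> (c0*d1)*X" .
    have "0 \<le> (X - p)*(X - r)" using h01 h10 by (simp add: p_def r_def X_def)
    also have "\<dots> = X*X - X*p - X*r + p*r" by (simp add: algebra_simps)
    also have "\<dots> \<le> X*(c0*d1 + X - p - r)" using pr by (simp add: algebra_simps)
    finally have "0 \<le> X*(c0*d1 + X - p - r)" .
    then have "0 \<le> c0*d1 + X - p - r" using Xp by (simp add: zero_le_mult_iff)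
    then show ?thesis by simp
  qed
  have "(a0+a1)*(b0+b1) = a0*b0 + (p + r) + a1*b1" by (simp add: p_def r_def algebra_simps)
  also have "\<dots> \<le> c0*d0 + (c0*d1 + X) + c1*d1" using h00 h11 cross by linarith
  also have "\<dots> = (c0+c1)*(d0+d1)" by (simp add: X_def algebra_simps)
  finally show ?thesis .
qed

lemma sum_Pow_insert:
  assumes "finite M" "x \<notin> M"
  shows "(\<Sum>A\<in>Pow (insert x M). f A) = (\<Sum>A\<in>Pow M. f A + f (insert x A))"
proof -
  have "(\<Sum>A\<in>Pow (insert x M). f A) = (\<Sum>A\<in>Pow M. f A) + (\<Sum>A\<in>insert x ` Pow M. f A)"
    unfolding Pow_insert by (rule sum.union_disjoint) (use assms in auto)
  also have "(\<Sum>A\<in>insert x ` Pow M. f A) = (\<Sum>A\<in>Pow M. f (insert x A))"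
  proof (rule sum.reindex[unfolded comp_def])
    show "inj_on (insert x) (Pow M)" using assms(2)
      by (auto simp: inj_on_def)
  qed
  finally show ?thesis by (simp add: sum.distrib)
qed

lemma AD:
  fixes M :: "'a set" and a b c d :: "'a set \<Rightarrow> real"
  assumes "finite M"
    and "\<forall>A\<subseteq>M. a A \<ge> 0" "\<forall>A\<subseteq>M. b A \<ge> 0" "\<forall>A\<subseteq>M. c A \<ge> 0" "\<forall>A\<subseteq>M. d A \<ge> 0"
    and "\<forall>A\<subseteq>M. \<forall>B\<subseteq>M. a A * b B \<le> c (A\<union>B) * d (A\<inter>B)"
  shows "(\<Sum>A\<in>Pow M. a A) * (\<Sum>A\<in>Pow M. b A) \<le> (\<Sum>A\<in>Pow M. c A) * (\<Sum>A\<in>Pow M. d A)"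
  using assms
proof (induction M arbitrary: a b c d rule: finite_induct)
  case empty
  then show ?case by simp
next
  case (insert x M)
  define a' where "a' A = a A + a (insert x A)" for A
  define b' where "b' A = b A + b (insert x A)" for A
  define c' where "c' A = c A + c (insert x A)" for A
  define d' where "d' A = d A + d (insert x A)" for A
  have sub: "A \<subseteq> M \<Longrightarrow> insert x A \<subseteq> insert x M" "A \<subseteq> M \<Longrightarrow> A \<subseteq> insert x M" for A by auto
  have IH: "(\<Sum>A\<in>Pow M. a' A) * (\<Sum>A\<in>Pow M. b' A) \<le> (\<Sum>A\<in>Pow M. c' A) * (\<Sum>A\<in>Pow M. d' A)"
  proof (rule insert.IH)
    show "\<forall>A\<subseteq>M. a' A \<ge> 0" using insert.prems(1) sub by (simp add: a'_def add_nonneg_nonneg)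
    show "\<forall>A\<subseteq>M. b' A \<ge> 0" using insert.prems(2) sub by (simp add: b'_def add_nonneg_nonneg)
    show "\<forall>A\<subseteq>M. c' A \<ge> 0" using insert.prems(3) sub by (simp add: c'_def add_nonneg_nonneg)
    show "\<forall>A\<subseteq>M. d' A \<ge> 0" using insert.prems(4) sub by (simp add: d'_def add_nonneg_nonneg)
    show "\<forall>A\<subseteq>M. \<forall>B\<subseteq>M. a' A * b' B \<le> c' (A\<union>B) * d' (A\<inter>B)"
    proof (intro allI impI)
      fix A B assume A: "A \<subseteq> M" and B: "B \<subseteq> M"
      have xA: "x \<notin> A" and xB: "x \<notin> B" using A B insert.hyps by auto
      have H: "\<And>A B. A \<subseteq> insert x M \<Longrightarrow> B \<subseteq> insert x M \<Longrightarrow> a A * b B \<le> c (A\<union>B) * d (A\<inter>B)"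
        using insert.prems(5) by blast
      have na: "a A \<ge> 0" "a (insert x A) \<ge> 0" "b B \<ge> 0" "b (insert x B) \<ge> 0"
        "c (A\<union>B) \<ge> 0" "c (insert x (A\<union>B)) \<ge> 0" "d (A\<inter>B) \<ge> 0" "d (insert x (A\<inter>B)) \<ge> 0"
      proof -
        have pa: "\<And>A. A \<subseteq> insert x M \<Longrightarrow> 0 \<le> a A" using insert.prems(1) by blast
        have pb: "\<And>A. A \<subseteq> insert x M \<Longrightarrow> 0 \<le> b A" using insert.prems(2) by blast
        have pc: "\<And>A. A \<subseteq> insert x M \<Longrightarrow> 0 \<le> c A" using insert.prems(3) by blast
        have pd: "\<And>A. A \<subseteq> insert x M \<Longrightarrow> 0 \<le> d A" using insert.prems(4) by blast
        have s: "A \<subseteq> insert x M" "insert x A \<subseteq> insert x M" "B \<subseteq> insert x M" "insert x B \<subseteq> insert x M"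
          "A\<union>B \<subseteq> insert x M" "insert x (A\<union>B) \<subseteq> insert x M" "A\<inter>B \<subseteq> insert x M" "insert x (A\<inter>B) \<subseteq> insert x M"
          using A B by auto
        show "a A \<ge> 0" "a (insert x A) \<ge> 0" "b B \<ge> 0" "b (insert x B) \<ge> 0"
          "c (A\<union>B) \<ge> 0" "c (insert x (A\<union>B)) \<ge> 0" "d (A\<inter>B) \<ge> 0" "d (insert x (A\<inter>B)) \<ge> 0"
          by (rule pa pb pc pd, rule s)+
      qed
      have e1: "insert x A \<inter> B = A \<inter> B" "A \<inter> insert x B = A \<inter> B" using xA xB by auto
      have "(a A + a (insert x A)) * (b B + b (insert x B))
          \<le> (c (A\<union>B) + c (insert x (A\<union>B))) * (d (A\<inter>B) + d (insert x (A\<inter>B)))"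
      proof (rule one_dim)
        show "a A * b B \<le> c (A\<union>B) * d (A\<inter>B)" using H[of A B] A B by auto
        show "a A * b (insert x B) \<le> c (insert x (A\<union>B)) * d (A\<inter>B)"
          using H[of A "insert x B"] A B e1 by auto
        show "a (insert x A) * b B \<le> c (insert x (A\<union>B)) * d (A\<inter>B)"
          using H[of "insert x A" B] A B e1 by auto
        show "a (insert x A) * b (insert x B) \<le> c (insert x (A\<union>B)) * d (insert x (A\<inter>B))"
          using H[of "insert x A" "insert x B"] A B by auto
      qed (fact na)+
      then show "a' A * b' B \<le> c' (A\<union>B) * d' (A\<inter>B)" by (simp add: a'_def b'_def c'_def d'_def)
    qed
  qed
  moreover have "(\<Sum>A\<in>Pow (insert x M). a A) = (\<Sum>A\<in>Pow M. a' A)"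
    unfolding a'_def by (rule sum_Pow_insert[OF insert.hyps])
  moreover have "(\<Sum>A\<in>Pow (insert x M). b A) = (\<Sum>A\<in>Pow M. b' A)"
    unfolding b'_def by (rule sum_Pow_insert[OF insert.hyps])
  moreover have "(\<Sum>A\<in>Pow (insert x M). c A) = (\<Sum>A\<in>Pow M. c' A)"
    unfolding c'_def by (rule sum_Pow_insert[OF insert.hyps])
  moreover have "(\<Sum>A\<in>Pow (insert x M). d A) = (\<Sum>A\<in>Pow M. d' A)"
    unfolding d'_def by (rule sum_Pow_insert[OF insert.hyps])
  ultimately show ?case by simp
qed


lemma compl_bij: "bij_betw (\<lambda>W. M - W) (Pow M) (Pow M)"
  by (rule bij_betw_byWitness[where f'="\<lambda>W. M - W"]) auto

lemma fiber:
  fixes N S T :: "nat set" and \<alpha> \<beta> \<gamma> \<delta> :: "nat set \<Rightarrow> real"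
  assumes fin: "finite N" and TS: "T \<subseteq> S" and SN: "S \<subseteq> N"
    and na: "\<And>A. A \<subseteq> N \<Longrightarrow> \<alpha> A \<ge> 0" and nb: "\<And>A. A \<subseteq> N \<Longrightarrow> \<beta> A \<ge> 0"
    and nc: "\<And>A. A \<subseteq> N \<Longrightarrow> \<gamma> A \<ge> 0" and nd: "\<And>A. A \<subseteq> N \<Longrightarrow> \<delta> A \<ge> 0"
    and hyp: "\<And>A B. A \<subseteq> N \<Longrightarrow> B \<subseteq> N \<Longrightarrow> \<alpha> A * \<beta> B \<le> \<gamma> (A \<union> B) * \<delta> (A \<inter> B)"
  shows "(\<Sum>U\<in>Pow (S-T). \<alpha> (T\<union>U) * \<beta> (S-U)) \<le> (\<Sum>U\<in>Pow (S-T). \<gamma> (T\<union>U) * \<delta> (S-U))"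
proof -
  define M where "M = S - T"
  define p where "p U = \<alpha> (T\<union>U) * \<beta> (S-U)" for U
  define pt where "pt W = \<alpha> (S-W) * \<beta> (T\<union>W)" for W
  define qt where "qt Z = \<gamma> (T\<union>Z) * \<delta> (S-Z)" for Z
  define q where "q Z = \<gamma> (S-Z) * \<delta> (T\<union>Z)" for Z
  have finM: "finite M" using fin SN M_def finite_subset by auto
  have sN: "\<And>U. U \<subseteq> M \<Longrightarrow> T \<union> U \<subseteq> N" using TS SN by (auto simp: M_def)
  have sN': "\<And>U. S - U \<subseteq> N" using SN by auto
  have main: "(\<Sum>U\<in>Pow M. p U) * (\<Sum>U\<in>Pow M. pt U) \<le> (\<Sum>U\<in>Pow M. qt U) * (\<Sum>U\<in>Pow M. q U)"
  proof (rule AD[OF finM])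
    show "\<forall>A\<subseteq>M. 0 \<le> p A" unfolding p_def using na nb sN sN' by (simp add: mult_nonneg_nonneg)
    show "\<forall>A\<subseteq>M. 0 \<le> pt A" unfolding pt_def using na nb sN sN' by (simp add: mult_nonneg_nonneg)
    show "\<forall>A\<subseteq>M. 0 \<le> qt A" unfolding qt_def using nc nd sN sN' by (simp add: mult_nonneg_nonneg)
    show "\<forall>A\<subseteq>M. 0 \<le> q A" unfolding q_def using nc nd sN sN' by (simp add: mult_nonneg_nonneg)
    show "\<forall>U\<subseteq>M. \<forall>W\<subseteq>M. p U * pt W \<le> qt (U \<union> W) * q (U \<inter> W)"
    proof (intro allI impI)
      fix U W assume U: "U \<subseteq> M" and W: "W \<subseteq> M"
      have h1: "\<alpha> (T\<union>U) * \<beta> (T\<union>W) \<le> \<gamma> (T\<union>(U\<union>W)) * \<delta> (T\<union>(U\<inter>W))"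
      proof -
        have "\<alpha> (T\<union>U) * \<beta> (T\<union>W) \<le> \<gamma> ((T\<union>U)\<union>(T\<union>W)) * \<delta> ((T\<union>U)\<inter>(T\<union>W))"
          using hyp sN U W by blast
        moreover have "(T\<union>U)\<union>(T\<union>W) = T\<union>(U\<union>W)" "(T\<union>U)\<inter>(T\<union>W) = T\<union>(U\<inter>W)" by auto
        ultimately show ?thesis by simp
      qed
      have h2: "\<alpha> (S-W) * \<beta> (S-U) \<le> \<gamma> (S-(U\<inter>W)) * \<delta> (S-(U\<union>W))"
      proof -
        have "\<alpha> (S-W) * \<beta> (S-U) \<le> \<gamma> ((S-W)\<union>(S-U)) * \<delta> ((S-W)\<inter>(S-U))"
          using hyp sN' by blast
        moreover have "(S-W)\<union>(S-U) = S-(U\<inter>W)" "(S-W)\<inter>(S-U) = S-(U\<union>W)" by auto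
        ultimately show ?thesis by simp
      qed
      have "p U * pt W = (\<alpha> (T\<union>U) * \<beta> (T\<union>W)) * (\<alpha> (S-W) * \<beta> (S-U))"
        by (simp add: p_def pt_def algebra_simps)
      also have "\<dots> \<le> (\<gamma> (T\<union>(U\<union>W)) * \<delta> (T\<union>(U\<inter>W))) * (\<gamma> (S-(U\<inter>W)) * \<delta> (S-(U\<union>W)))"
      proof (rule mult_mono[OF h1 h2])
        have "T \<union> (U\<union>W) \<subseteq> N" "T \<union> (U\<inter>W) \<subseteq> N" using sN U W by auto
        then show "0 \<le> \<gamma> (T\<union>(U\<union>W)) * \<delta> (T\<union>(U\<inter>W))" using nc nd by (simp add: mult_nonneg_nonneg)
        show "0 \<le> \<alpha> (S-W) * \<beta> (S-U)" using na nb sN' by (simp add: mult_nonneg_nonneg)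
      qed
      also have "\<dots> = qt (U \<union> W) * q (U \<inter> W)" by (simp add: qt_def q_def algebra_simps)
      finally show "p U * pt W \<le> qt (U \<union> W) * q (U \<inter> W)" .
    qed
  qed
  have e1: "(\<Sum>U\<in>Pow M. pt U) = (\<Sum>U\<in>Pow M. p U)"
  proof -
    have "(\<Sum>U\<in>Pow M. p U) = (\<Sum>U\<in>Pow M. pt (M - U))"
    proof (rule sum.cong[OF refl])
      fix U assume "U \<in> Pow M"
      then have "S - (M - U) = T \<union> U" "T \<union> (M - U) = S - U" using TS by (auto simp: M_def)
      then show "p U = pt (M - U)" by (simp add: p_def pt_def)
    qed
    also have "\<dots> = (\<Sum>U\<in>Pow M. pt U)" by (rule sum.reindex_bij_betw[OF compl_bij])
    finally show ?thesis by simp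
  qed
  have e2: "(\<Sum>U\<in>Pow M. q U) = (\<Sum>U\<in>Pow M. qt U)"
  proof -
    have "(\<Sum>U\<in>Pow M. q U) = (\<Sum>U\<in>Pow M. qt (M - U))"
    proof (rule sum.cong[OF refl])
      fix U assume "U \<in> Pow M"
      then have "S - (M - U) = T \<union> U" "T \<union> (M - U) = S - U" using TS by (auto simp: M_def)
      then show "q U = qt (M - U)" by (simp add: q_def qt_def)
    qed
    also have "\<dots> = (\<Sum>U\<in>Pow M. qt U)" by (rule sum.reindex_bij_betw[OF compl_bij])
    finally show ?thesis .
  qed
  have "(\<Sum>U\<in>Pow M. p U)^2 \<le> (\<Sum>U\<in>Pow M. qt U)^2"
    using main e1 e2 by (simp add: power2_eq_square)
  moreover have "0 \<le> (\<Sum>U\<in>Pow M. qt U)"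
    by (rule sum_nonneg) (use nc nd sN sN' in \<open>auto simp: qt_def intro!: mult_nonneg_nonneg\<close>)
  ultimately have "(\<Sum>U\<in>Pow M. p U) \<le> (\<Sum>U\<in>Pow M. qt U)" by (rule power2_le_imp_le)
  then show ?thesis by (simp add: p_def qt_def M_def)
qed


lemma pair_sum_le:
  fixes N :: "nat set" and \<alpha> \<beta> \<gamma> \<delta> :: "nat set \<Rightarrow> real"
  assumes fin: "finite N"
    and na: "\<And>A. A \<subseteq> N \<Longrightarrow> \<alpha> A \<ge> 0" and nb: "\<And>A. A \<subseteq> N \<Longrightarrow> \<beta> A \<ge> 0"
    and nc: "\<And>A. A \<subseteq> N \<Longrightarrow> \<gamma> A \<ge> 0" and nd: "\<And>A. A \<subseteq> N \<Longrightarrow> \<delta> A \<ge> 0"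
    and hyp: "\<And>A B. A \<subseteq> N \<Longrightarrow> B \<subseteq> N \<Longrightarrow> \<alpha> A * \<beta> B \<le> \<gamma> (A \<union> B) * \<delta> (A \<inter> B)"
  shows "(\<Sum>(A,B)\<in>Pow N \<times> Pow N. if card A + card B = i then \<alpha> A * \<beta> B else 0)
       \<le> (\<Sum>(A,B)\<in>Pow N \<times> Pow N. if card A + card B = i then \<gamma> A * \<delta> B else 0)"
proof -
  define P where "P = Pow N \<times> Pow N"
  define g where "g = (\<lambda>(A::nat set,B::nat set). (A \<union> B, A \<inter> B))"
  define G1 where "G1 = (\<lambda>(A,B). if card A + card B = i then \<alpha> A * \<beta> B else 0)"
  define G2 where "G2 = (\<lambda>(A,B). if card A + card B = i then \<gamma> A * \<delta> B else 0)"
  have finP: "finite P" using fin by (simp add: P_def)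
  have gP: "g ` P \<subseteq> P" by (auto simp: g_def P_def)
  have fib: "(\<Sum>z\<in>{x \<in> P. g x = ST}. G1 z) \<le> (\<Sum>z\<in>{x \<in> P. g x = ST}. G2 z)" if ST: "ST \<in> P" for ST
  proof -
    obtain S T where STe: "ST = (S,T)" by fastforce
    have SN: "S \<subseteq> N" using ST STe by (auto simp: P_def)
    show ?thesis
    proof (cases "T \<subseteq> S")
      case False
      then have E: "{x \<in> P. g x = ST} = {}" by (auto simp: g_def STe)
      show ?thesis unfolding E by simp
    next
      case TS: True
      define e where "e = (\<lambda>U. (T \<union> U, S - U))"
      have img: "{x \<in> P. g x = ST} = e ` Pow (S - T)"
      proof
        show "{x \<in> P. g x = ST} \<subseteq> e ` Pow (S - T)"
        proof
          fix z assume z: "z \<in> {x \<in> P. g x = ST}"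
          obtain A B where zAB: "z = (A,B)" by fastforce
          have AB: "A \<union> B = S" "A \<inter> B = T" using z zAB STe by (auto simp: g_def)
          have "z = e (A - B)" using AB zAB by (auto simp: e_def)
          moreover have "A - B \<in> Pow (S - T)" using AB by auto
          ultimately show "z \<in> e ` Pow (S - T)" by blast
        qed
        show "e ` Pow (S - T) \<subseteq> {x \<in> P. g x = ST}"
          using TS SN by (auto simp: e_def g_def STe P_def)
      qed
      have inj: "inj_on e (Pow (S - T))"
      proof (rule inj_onI)
        fix U V assume "U \<in> Pow (S - T)" "V \<in> Pow (S - T)" "e U = e V"
        then show "U = V" by (auto simp: e_def)
      qed
      have card_eq: "card (T \<union> U) + card (S - U) = card S + card T" if "U \<in> Pow (S - T)" for U
      proof -
        have fS: "finite S" using SN fin finite_subset by blast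
        have U: "U \<subseteq> S" "U \<inter> T = {}" using that by auto
        have fU: "finite U" "finite T" using U fS TS finite_subset by blast+
        have "card (T \<union> U) = card T + card U" using U fU by (simp add: card_Un_disjoint inf_commute)
        moreover have "card (S - U) = card S - card U" using U fS by (simp add: card_Diff_subset fU)
        moreover have "card U \<le> card S" using U fS by (simp add: card_mono)
        ultimately show ?thesis by simp
      qed
      have s1: "(\<Sum>z\<in>{x \<in> P. g x = ST}. G1 z) = (\<Sum>U\<in>Pow (S-T). if card S + card T = i then \<alpha> (T\<union>U) * \<beta> (S-U) else 0)"
        unfolding img sum.reindex[OF inj] by (rule sum.cong) (auto simp: G1_def e_def card_eq)
      have s2: "(\<Sum>z\<in>{x \<in> P. g x = ST}. G2 z) = (\<Sum>U\<in>Pow (S-T). if card S + card T = i then \<gamma> (T\<union>U) * \<delta> (S-U) else 0)"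
        unfolding img sum.reindex[OF inj] by (rule sum.cong) (auto simp: G2_def e_def card_eq)
      show ?thesis
      proof (cases "card S + card T = i")
        case True
        then show ?thesis unfolding s1 s2 using fiber[where \<alpha>=\<alpha> and \<beta>=\<beta> and \<gamma>=\<gamma> and \<delta>=\<delta>, OF fin TS SN na nb nc nd hyp] by simp
      next
        case False
        then show ?thesis unfolding s1 s2 by simp
      qed
    qed
  qed
  have "(\<Sum>z\<in>P. G1 z) = (\<Sum>ST\<in>P. \<Sum>z\<in>{x \<in> P. g x = ST}. G1 z)"
    by (rule sum.group[OF finP finP gP, symmetric])
  also have "\<dots> \<le> (\<Sum>ST\<in>P. \<Sum>z\<in>{x \<in> P. g x = ST}. G2 z)"
    by (rule sum_mono) (rule fib)
  also have "\<dots> = (\<Sum>z\<in>P. G2 z)"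
    by (rule sum.group[OF finP finP gP])
  finally show ?thesis by (simp add: P_def G1_def G2_def)
qed

lemma coeff_prod:
  "coeff (set_gen_poly n f * set_gen_poly n g) i =
     (\<Sum>(A,B)\<in>Pow {1..n} \<times> Pow {1..n}. if card A + card B = i then f A * g B else 0)"
  unfolding set_gen_poly_def sum_product
  by (simp add: mult_monom coeff_sum sum.cartesian_product case_prod_unfold)

theorem theorem2p1:
  fixes n :: nat and \<alpha> \<beta> \<gamma> \<delta> :: "nat set \<Rightarrow> real"
  assumes "n > 0"
    and "\<And>A. A \<subseteq> {1..n} \<Longrightarrow> \<alpha> A \<ge> 0"
    and "\<And>A. A \<subseteq> {1..n} \<Longrightarrow> \<beta> A \<ge> 0"
    and "\<And>A. A \<subseteq> {1..n} \<Longrightarrow> \<gamma> A \<ge> 0"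
    and "\<And>A. A \<subseteq> {1..n} \<Longrightarrow> \<delta> A \<ge> 0"
    and "\<And>A B. A \<subseteq> {1..n} \<Longrightarrow> B \<subseteq> {1..n} \<Longrightarrow>
           \<alpha> A * \<beta> B \<le> \<gamma> (A \<union> B) * \<delta> (A \<inter> B)"
  shows "set_gen_poly n \<alpha> * set_gen_poly n \<beta> \<lless> set_gen_poly n \<gamma> * set_gen_poly n \<delta>"
  unfolding coeff_le_def
proof
  fix i
  have "coeff (set_gen_poly n \<alpha> * set_gen_poly n \<beta>) i \<le> coeff (set_gen_poly n \<gamma> * set_gen_poly n \<delta>) i"
    unfolding coeff_prod by (rule pair_sum_le) (use assms in auto)
  then show "0 \<le> coeff (set_gen_poly n \<gamma> * set_gen_poly n \<delta> - set_gen_poly n \<alpha> * set_gen_poly n \<beta>) i"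
    by simp
qed

end
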